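(* Let $V$ be a finite ground set partitioned into groups $V_1,\dots,V_m$, let $\alpha$ be a nonnegative integer and $c$ a positive integer, and let $f:2^V\to\mathbb{R}_{\ge0}$ be submodular (not necessarily monotone). Let $OPT$ be an optimal solution of Problem P.2: maximize $f(S)$ over $S\subseteq V$ subject to $|S\cap V_i|-|S\cap V_j|\le\alpha$ for all $i,j\in[m]$ and $|S|\le c$. Assume $\min_{i\in[m]}|OPT\cap V_i|>1$, and let $z=\min_{i\in[m]}\lfloor|OPT\cap V_i|/2\rfloor$. Then the output $A^{\mathsf{final}}$ of the two-phase algorithm described in the context satisfies $$\mathbb{E}[f(A^{\mathsf{final}})]\ge\frac{1/e-o(1)}{8}\cdot f(OPT).$$
   Context: Problem P.2.2 (depending on $z$): maximize $f(S)$ over $S\subseteq V$ subject to $|S\cap V_i|\le z+\alpha$ for all $i$ and $\sum_{i\in[m]}\max\{z,|S\cap V_i|\}\le c$. Its feasible sets form a matroid. Algorithm: Phase 1: compute a random feasible solution $A^{P22}$ of P.2.2 using the randomized algorithm of Feldman, Naor and Schwartz (2011) for (non-monotone) submodular maximization under a matroid constraint, which guarantees $\mathbb{E}[f(A^{P22})]\ge(1/e-o(1))\,f(S^{P22})$ where $S^{P22}$ is an optimal solution of P.2.2. Phase 2: let $L=\{i\in[m]:|A^{P22}\cap V_i|<z\}$; for each $i\in L$ pick arbitrary disjoint $X_i,Y_i\subseteq V_i\setminus A^{P22}$ with $|X_i|=|Y_i|=z-|A^{P22}\cap V_i|$; let $A^1=A^{P22}\cup\bigcup_{i\in L}X_i$,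 $A^2=A^{P22}\cup\bigcup_{i\in L}Y_i$, and output $A^{\mathsf{final}}$, the one of $A^1,A^2$ with larger $f$-value. The expectation is over the randomness of Phase 1. *)

theory Defs
  imports "HOL-Probability.Probability"
begin

definition is_partition :: "'a set \<Rightarrow> nat \<Rightarrow> (nat \<Rightarrow> 'a set) \<Rightarrow> bool" where
  "is_partition V m Vg \<longleftrightarrow>
     (\<Union>i\<in>{1..m}. Vg i) = V \<and>
     (\<forall>i\<in>{1..m}. \<forall>j\<in>{1..m}. i \<noteq> j \<longrightarrow> Vg i \<inter> Vg j = {})"

definition submodular_on :: "'a set \<Rightarrow> ('a set \<Rightarrow> real) \<Rightarrow> bool" where
  "submodular_on V f \<longleftrightarrow>
     (\<forall>A B. A \<subseteq> V \<longrightarrow> B \<subseteq> V \<longrightarrow> f (A \<union> B) + f (A \<inter> B) \<le> f A + f B)"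

definition feasible_P2 ::
  "'a set \<Rightarrow> nat \<Rightarrow> (nat \<Rightarrow> 'a set) \<Rightarrow> nat \<Rightarrow> nat \<Rightarrow> 'a set \<Rightarrow> bool" where
  "feasible_P2 V m Vg \<alpha> c S \<longleftrightarrow>
     S \<subseteq> V \<and>
     (\<forall>i\<in>{1..m}. \<forall>j\<in>{1..m}.
        int (card (S \<inter> Vg i)) - int (card (S \<inter> Vg j)) \<le> int \<alpha>) \<and>
     card S \<le> c"

definition feasible_P22 ::
  "'a set \<Rightarrow> nat \<Rightarrow> (nat \<Rightarrow> 'a set) \<Rightarrow> nat \<Rightarrow> nat \<Rightarrow> nat \<Rightarrow> 'a set \<Rightarrow> bool" where
  "feasible_P22 V m Vg \<alpha> c z S \<longleftrightarrow>
     S \<subseteq> V \<and>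
     (\<forall>i\<in>{1..m}. card (S \<inter> Vg i) \<le> z + \<alpha>) \<and>
     (\<Sum>i\<in>{1..m}. max z (card (S \<inter> Vg i))) \<le> c"

definition is_optimal :: "('a set \<Rightarrow> bool) \<Rightarrow> ('a set \<Rightarrow> real) \<Rightarrow> 'a set \<Rightarrow> bool" where
  "is_optimal feas f S \<longleftrightarrow> feas S \<and> (\<forall>T. feas T \<longrightarrow> f T \<le> f S)"

definition deficient :: "nat \<Rightarrow> (nat \<Rightarrow> 'a set) \<Rightarrow> nat \<Rightarrow> 'a set \<Rightarrow> nat set" where
  "deficient m Vg z A = {i\<in>{1..m}. card (A \<inter> Vg i) < z}"

text \<open>X, Y : the (arbitrary) choices made in Phase 2, as functions of the Phase-1 outcome A
  and the group index i. This predicate states the requirements on them.\<close>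
definition valid_phase2_choice ::
  "nat \<Rightarrow> (nat \<Rightarrow> 'a set) \<Rightarrow> nat \<Rightarrow> 'a set \<Rightarrow> ('a set \<Rightarrow> nat \<Rightarrow> 'a set) \<Rightarrow>
   ('a set \<Rightarrow> nat \<Rightarrow> 'a set) \<Rightarrow> bool" where
  "valid_phase2_choice m Vg z A X Y \<longleftrightarrow>
     (\<forall>i\<in>deficient m Vg z A.
        X A i \<subseteq> Vg i - A \<and> Y A i \<subseteq> Vg i - A \<and> X A i \<inter> Y A i = {} \<and>
        card (X A i) = z - card (A \<inter> Vg i) \<and> card (Y A i) = z - card (A \<inter> Vg i))"

definition phase2_output ::
  "('a set \<Rightarrow> real) \<Rightarrow> nat \<Rightarrow> (nat \<Rightarrow> 'a set) \<Rightarrow> nat \<Rightarrow>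
   ('a set \<Rightarrow> nat \<Rightarrow> 'a set) \<Rightarrow> ('a set \<Rightarrow> nat \<Rightarrow> 'a set) \<Rightarrow> 'a set \<Rightarrow> 'a set" where
  "phase2_output f m Vg z X Y A =
     (let A1 = A \<union> (\<Union>i\<in>deficient m Vg z A. X A i);
          A2 = A \<union> (\<Union>i\<in>deficient m Vg z A. Y A i)
      in if f A2 \<le> f A1 then A1 else A2)"

end

theory Submission
  imports Defs
begin

lemma split_bound:
  fixes f :: "'a set \<Rightarrow> real" and M :: real
  assumes finV: "finite V"
    and cover: "(\<Union>i\<in>{1..m}. Vg i) = V"
    and disj: "\<forall>i\<in>{1..m}. \<forall>j\<in>{1..m}. i \<noteq> j \<longrightarrow> Vg i \<inter> Vg j = {}"
    and nonneg: "\<forall>S. S \<subseteq> V \<longrightarrow> 0 \<le> f S"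
    and submod: "submodular_on V f"
    and T0V: "T0 \<subseteq> V"
    and feas: "\<And>S. S \<subseteq> T0 \<Longrightarrow> (\<forall>i\<in>{1..m}. card (S \<inter> Vg i) \<le> b) \<Longrightarrow> f S \<le> M"
  shows "T \<subseteq> T0 \<Longrightarrow> (\<forall>i\<in>{1..m}. card (T \<inter> Vg i) \<le> Suc n * b) \<Longrightarrow> f T \<le> real (Suc n) * M"
proof (induction n arbitrary: T)
  case 0
  then show ?case using feas by simp
next
  case (Suc n)
  have TV: "T \<subseteq> V" using Suc.prems T0V by blast
  define g where "g i = (SOME s. s \<subseteq> T \<inter> Vg i \<and> card s = min b (card (T \<inter> Vg i)))" for i
  have g: "g i \<subseteq> T \<inter> Vg i \<and> card (g i) = min b (card (T \<inter> Vg i))" for i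
  proof -
    have "\<exists>s. s \<subseteq> T \<inter> Vg i \<and> card s = min b (card (T \<inter> Vg i))"
      by (meson min.cobounded2 obtain_subset_with_card_n)
    then show ?thesis unfolding g_def by (rule someI_ex)
  qed
  define S where "S = (\<Union>i\<in>{1..m}. g i)"
  have SgT: "S \<subseteq> T" using g unfolding S_def by blast
  have Sj: "S \<inter> Vg j = g j" if j: "j \<in> {1..m}" for j
  proof
    show "S \<inter> Vg j \<subseteq> g j"
    proof
      fix x assume x: "x \<in> S \<inter> Vg j"
      then obtain i where i: "i \<in> {1..m}" "x \<in> g i" unfolding S_def by blast
      have "i = j"
      proof (rule ccontr)
        assume "i \<noteq> j"
        then have "Vg i \<inter> Vg j = {}" using disj i j by blast
        then show False using g[of i] i x by blast
      qed
      then show "x \<in> g j" using i by simp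
    qed
    show "g j \<subseteq> S \<inter> Vg j" using g[of j] j unfolding S_def by blast
  qed
  have finT: "finite T" using TV finV finite_subset by blast
  have "f S \<le> M"
  proof (rule feas)
    show "S \<subseteq> T0" using SgT Suc.prems by blast
    show "\<forall>i\<in>{1..m}. card (S \<inter> Vg i) \<le> b" using Sj g by simp
  qed
  moreover have "f (T - S) \<le> real (Suc n) * M"
  proof (rule Suc.IH)
    show "T - S \<subseteq> T0" using Suc.prems by blast
    show "\<forall>i\<in>{1..m}. card ((T - S) \<inter> Vg i) \<le> Suc n * b"
    proof
      fix i assume i: "i \<in> {1..m}"
      have "(T - S) \<inter> Vg i = T \<inter> Vg i - g i" using Sj[OF i] by blast
      moreover have "finite (g i)" using g[of i] finT finite_subset by blast
      ultimately have "card ((T - S) \<inter> Vg i) = card (T \<inter> Vg i) - card (g i)"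
        using g[of i] card_Diff_subset by metis
      moreover have "card (T \<inter> Vg i) \<le> Suc (Suc n) * b" using Suc.prems i by blast
      ultimately show "card ((T - S) \<inter> Vg i) \<le> Suc n * b" using g[of i] by auto
    qed
  qed
  moreover have "f (S \<union> (T - S)) + f (S \<inter> (T - S)) \<le> f S + f (T - S)"
  proof -
    have "S \<subseteq> V" "T - S \<subseteq> V" using TV SgT by auto
    then show ?thesis using submod unfolding submodular_on_def by presburger
  qed
  moreover have "S \<union> (T - S) = T" using SgT by blast
  moreover have "0 \<le> f (S \<inter> (T - S))" using nonneg by simp
  ultimately show ?case by (simp add: algebra_simps)
qed

lemma phase2_bound:
  fixes f :: "'a set \<Rightarrow> real"
  assumes cover: "(\<Union>i\<in>{1..m}. Vg i) = V"
    and disj: "\<forall>i\<in>{1..m}. \<forall>j\<in>{1..m}. i \<noteq> j \<longrightarrow> Vg i \<inter> Vg j = {}"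
    and nonneg: "\<forall>S. S \<subseteq> V \<longrightarrow> 0 \<le> f S"
    and submod: "submodular_on V f"
    and AV: "A \<subseteq> V"
    and ch: "valid_phase2_choice m Vg z A X Y"
  shows "f A / 2 \<le> f (phase2_output f m Vg z X Y A) \<and> 0 \<le> f (phase2_output f m Vg z X Y A)"
proof -
  define D where "D = deficient m Vg z A"
  have Dsub: "D \<subseteq> {1..m}" unfolding D_def deficient_def by auto
  have ch': "\<forall>i\<in>D. X A i \<subseteq> Vg i - A \<and> Y A i \<subseteq> Vg i - A \<and> X A i \<inter> Y A i = {}"
    using ch unfolding valid_phase2_choice_def D_def by blast
  define A1 where "A1 = A \<union> (\<Union>i\<in>D. X A i)"
  define A2 where "A2 = A \<union> (\<Union>i\<in>D. Y A i)"
  have out: "phase2_output f m Vg z X Y A = (if f A2 \<le> f A1 then A1 else A2)"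
    unfolding phase2_output_def A1_def A2_def D_def Let_def by simp
  have A1V: "A1 \<subseteq> V" unfolding A1_def using AV ch' Dsub cover by blast
  have A2V: "A2 \<subseteq> V" unfolding A2_def using AV ch' Dsub cover by blast
  have int: "A1 \<inter> A2 = A"
  proof
    show "A \<subseteq> A1 \<inter> A2" unfolding A1_def A2_def by blast
    show "A1 \<inter> A2 \<subseteq> A"
    proof
      fix x assume x: "x \<in> A1 \<inter> A2"
      show "x \<in> A"
      proof (rule ccontr)
        assume "x \<notin> A"
        then obtain i j where ij: "i \<in> D" "j \<in> D" "x \<in> X A i" "x \<in> Y A j"
          using x unfolding A1_def A2_def by blast
        show False
        proof (cases "i = j")
          case True then show False using ij ch' by blast
        next
          case False
          then have "Vg i \<inter> Vg j = {}" using disj ij Dsub by blast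
          then show False using ij ch' by blast
        qed
      qed
    qed
  qed
  have "f (A1 \<union> A2) + f (A1 \<inter> A2) \<le> f A1 + f A2"
    using submod A1V A2V unfolding submodular_on_def by presburger
  moreover have "0 \<le> f (A1 \<union> A2)" using nonneg A1V A2V by simp
  moreover have "0 \<le> f A1" "0 \<le> f A2" using nonneg A1V A2V by simp_all
  ultimately show ?thesis unfolding out using int by auto
qed

theorem theorem4:
  fixes V :: "'a set" and m :: nat and Vg :: "nat \<Rightarrow> 'a set"
    and \<alpha> c :: nat and f :: "'a set \<Rightarrow> real"
    and OPT :: "'a set" and z :: nat
    and \<epsilon> :: real
    and S22 :: "'a set"
    and P1 :: "'a set pmf"
    and X Y :: "'a set \<Rightarrow> nat \<Rightarrow> 'a set"
  assumes finV: "finite V"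
    and m_pos: "0 < m"
    and part: "is_partition V m Vg"
    and c_pos: "0 < c"
    and f_nonneg: "\<forall>S. S \<subseteq> V \<longrightarrow> 0 \<le> f S"
    and f_submod: "submodular_on V f"
    and OPT_opt: "is_optimal (feasible_P2 V m Vg \<alpha> c) f OPT"
    and min_gt1: "\<forall>i\<in>{1..m}. 1 < card (OPT \<inter> Vg i)"
    and z_def: "z = Min ((\<lambda>i. card (OPT \<inter> Vg i) div 2) ` {1..m})"
    and S22_opt: "is_optimal (feasible_P22 V m Vg \<alpha> c z) f S22"
    and P1_feas: "\<forall>A\<in>set_pmf P1. feasible_P22 V m Vg \<alpha> c z A"
    and P1_approx: "measure_pmf.expectation P1 f \<ge> (1 / exp 1 - \<epsilon>) * f S22"
    and choice: "\<forall>A\<in>set_pmf P1. valid_phase2_choice m Vg z A X Y"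
  shows "measure_pmf.expectation P1 (\<lambda>A. f (phase2_output f m Vg z X Y A))
           \<ge> (1 / exp 1 - \<epsilon>) / 8 * f OPT"
proof -
  have cover: "(\<Union>i\<in>{1..m}. Vg i) = V"
    and disj: "\<forall>i\<in>{1..m}. \<forall>j\<in>{1..m}. i \<noteq> j \<longrightarrow> Vg i \<inter> Vg j = {}"
    using part unfolding is_partition_def by auto
  have optP2: "feasible_P2 V m Vg \<alpha> c OPT" using OPT_opt unfolding is_optimal_def by blast
  have OPTV: "OPT \<subseteq> V" and cardOPT: "card OPT \<le> c"
    and bal: "\<forall>i\<in>{1..m}. \<forall>j\<in>{1..m}.
        int (card (OPT \<inter> Vg i)) - int (card (OPT \<inter> Vg j)) \<le> int \<alpha>"
    using optP2 unfolding feasible_P2_def by auto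
  have finOPT: "finite OPT" using OPTV finV finite_subset by blast
  define K where "K i = card (OPT \<inter> Vg i)" for i
  have fin_img: "finite ((\<lambda>i. K i div 2) ` {1..m})" by simp
  have ne_img: "(\<lambda>i. K i div 2) ` {1..m} \<noteq> {}" using m_pos by auto
  have zK: "z = Min ((\<lambda>i. K i div 2) ` {1..m})" using z_def unfolding K_def by simp
  obtain j0 where j0: "j0 \<in> {1..m}" "z = K j0 div 2"
    using Min_in[OF fin_img ne_img] zK by auto
  have zle: "z \<le> K i div 2" if "i \<in> {1..m}" for i
    using Min_le[OF fin_img] that zK by auto
  have Kj0: "K j0 \<le> 2 * z + 1" using j0 by simp
  have z1: "1 \<le> z" using j0 min_gt1 unfolding K_def by fastforce
  have Kbound: "K i \<le> 3 * (z + \<alpha>)" if i: "i \<in> {1..m}" for i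
  proof -
    have "int (K i) - int (K j0) \<le> int \<alpha>" using bal i j0 unfolding K_def by blast
    then show ?thesis using Kj0 z1 by presburger
  qed
  have OPTcard: "card OPT = (\<Sum>i\<in>{1..m}. K i)"
  proof -
    have "OPT = (\<Union>i\<in>{1..m}. OPT \<inter> Vg i)" using OPTV cover by blast
    then have "card OPT = card (\<Union>i\<in>{1..m}. OPT \<inter> Vg i)" by simp
    also have "\<dots> = (\<Sum>i\<in>{1..m}. card (OPT \<inter> Vg i))"
      by (rule card_UN_disjoint) (use finOPT disj in auto)
    finally show ?thesis unfolding K_def .
  qed
  have feas22: "f S \<le> f S22" if S: "S \<subseteq> OPT" "\<forall>i\<in>{1..m}. card (S \<inter> Vg i) \<le> z + \<alpha>" for S
  proof -
    have "max z (card (S \<inter> Vg i)) \<le> K i" if i: "i \<in> {1..m}" for i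
    proof -
      have "card (S \<inter> Vg i) \<le> K i" unfolding K_def
        by (rule card_mono) (use finOPT S in auto)
      moreover have "z \<le> K i" using zle[OF i] by simp
      ultimately show ?thesis by simp
    qed
    then have "(\<Sum>i\<in>{1..m}. max z (card (S \<inter> Vg i))) \<le> (\<Sum>i\<in>{1..m}. K i)"
      by (rule sum_mono)
    then have "feasible_P22 V m Vg \<alpha> c z S"
      unfolding feasible_P22_def using S OPTV OPTcard cardOPT by auto
    then show ?thesis using S22_opt unfolding is_optimal_def by blast
  qed
  have "f OPT \<le> real (Suc 2) * f S22"
    by (rule split_bound[OF finV cover disj f_nonneg f_submod OPTV, of "z + \<alpha>" "f S22" OPT 2])
       (use feas22 Kbound in \<open>auto simp: K_def\<close>)
  then have fOPT: "f OPT \<le> 3 * f S22" by simp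
  have S22V: "S22 \<subseteq> V" using S22_opt unfolding is_optimal_def feasible_P22_def by blast
  have fS22: "0 \<le> f S22" using f_nonneg S22V by blast
  have fOPT0: "0 \<le> f OPT" using f_nonneg OPTV by blast
  have AV: "A \<subseteq> V" if "A \<in> set_pmf P1" for A using P1_feas that unfolding feasible_P22_def by blast
  have finP: "finite (set_pmf P1)"
    by (rule finite_subset[of _ "Pow V"]) (use AV finV in auto)
  have pw: "f A / 2 \<le> f (phase2_output f m Vg z X Y A) \<and> 0 \<le> f (phase2_output f m Vg z X Y A)"
    if "A \<in> set_pmf P1" for A
    using phase2_bound[OF cover disj f_nonneg f_submod AV[OF that]] choice that by blast
  let ?g = "\<lambda>A. f (phase2_output f m Vg z X Y A)"
  have E1: "measure_pmf.expectation P1 (\<lambda>A. f A / 2) \<le> measure_pmf.expectation P1 ?g"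
    by (rule integral_mono_AE) (use finP pw in \<open>auto intro: integrable_measure_pmf_finite simp: AE_measure_pmf_iff\<close>)
  have E2: "0 \<le> measure_pmf.expectation P1 ?g"
    by (rule integral_nonneg_AE) (use pw in \<open>auto simp: AE_measure_pmf_iff\<close>)
  have E3: "measure_pmf.expectation P1 (\<lambda>A. f A / 2) = measure_pmf.expectation P1 f / 2"
    by simp
  show ?thesis
  proof (cases "0 \<le> 1 / exp 1 - \<epsilon>")
    case True
    have "(1 / exp 1 - \<epsilon>) / 8 * f OPT \<le> (1 / exp 1 - \<epsilon>) / 8 * (3 * f S22)"
      using True fOPT by (intro mult_left_mono) auto
    also have "\<dots> \<le> (1 / exp 1 - \<epsilon>) * f S22 / 2" using True fS22 by (simp add: mult_left_mono)
    also have "\<dots> \<le> measure_pmf.expectation P1 f / 2" using P1_approx by simp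
    finally show ?thesis using E1 E3 by (simp add: mult.commute)
  next
    case False
    then have "(1 / exp 1 - \<epsilon>) / 8 * f OPT \<le> 0" using fOPT0 by (simp add: mult_nonpos_nonneg)
    then show ?thesis using E2 by linarith
  qed
qed

end
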